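(* Fix a dynamic environment and suppose the agent is myopic. For any mechanism $M=(\pi,p)$ that is IC for a myopic agent, there is another mechanism $M'=(\pi',p')$ that is IC for a myopic agent (and is IR whenever $M$ is) such that (i) $u_P^{M'}(\emptyset)\ge u_P^M(\emptyset)$, and (ii) for all $h\in\mathcal H$ and $s\in\mathcal S$, $\pi'(h,s)$ and $p'(h,s)$ depend only on $|h|$, $s_p$, $a_p$ and $s$, where $(s_p,a_p)=\mathrm{last}(h)$. Moreover, this holds regardless of whether payments are allowed and of which IR constraints (none, overall, dynamic) are required.
   Context: A dynamic environment consists of a time horizon $T\in\mathbb N$, a finite state space $\mathcal S$, a finite action space $\mathcal A$, valuation functions $v^P_t,v^A_t:\mathcal S\times\mathcal A\to\mathbb R$ ($t\in[T]$) of the principal and the agent, an initial distribution $P_0\in\Delta(\mathcal S)$, and transition operators $P_t:\mathcal S\times\mathcal A\to\Delta(\mathcal S)$ with $P_t(s,a,s')$ the probability of next state $s'$ after action $a$ in state $s$ at time $t$. For $t\ge1$, $\mathcal H_t$ is the set of sequences $(s_1,a_1,\dots,s_t,a_t)$; $\mathcal H_0=\{\emptyset\}$; $\mathcal H=\bigcup_{t=0}^{T-1}\mathcal H_t$; $h+(s,a)$ appends $(s,a)$; for $h=(s_1,a_1,\dots,s_t,a_t)$, $\mathrm{last}(h)=(s_t,a_t)$, and $\mathrm{last}(\emptyset)$ is an arbitrary fixed state-action pair. A mechanism $M=(\pi,p)$ has $\pi:\mathcal H\times\mathcal S\to\Delta(\mathcal A)$ and payments $p:\mathcal H\times\mathcal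 S\to\mathbb R$ (agent to principal; $p\equiv0$ if payments are not allowed). Principal's onward utility: $u_P^M(h,s)=\sum_a\pi(h,s,a)\big(v^P_{|h|+1}(s,a)+\sum_{s'}P_{|h|+1}(s,a,s')u_P^M(h+(s,a),s')\big)+p(h,s)$ (zero when $|h|=T$), $u_P^M(\emptyset)=\sum_sP_0(s)u_P^M(\emptyset,s)$. Myopic agent's utility: $u_A^M(h,s)=\sum_a\pi(h,s,a)v^A_{|h|+1}(s,a)-p(h,s)$. A reporting strategy $r:\mathcal H\times\mathcal S\to\mathcal S$ induces for $h=(s_1,a_1,\dots,s_t,a_t)$ the reported history $r(h)=(s'_1,a_1,\dots,s'_t,a_t)$ with $s'_i=r((s_1,a_1,\dots,s_{i-1},a_{i-1}),s_i)$, and $u_A^{M,r}(h,s)=\sum_a\pi(r(h),r(h,s),a)v^A_{|h|+1}(s,a)-p(r(h),r(h,s))$. $M$ is IC for a myopic agent if for all $h\in\mathcal H,s\in\mathcal S$ and every $r$ with $r(h',s')=s'$ whenever $|h'|<|h|$, $u_A^M(h,s)\ge u_A^{M,r}(h,s)$. Overall IR: $\sum_sP_0(s)u_A^M(\emptyset,s)\ge0$; dynamic IR: $u_A^M(h,s)\ge0$ for all $h\in\mathcal H,s\in\mathcal S$. *)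

theory Defs
  imports "HOL-Probability.Probability_Mass_Function"
begin

text \<open>Histories are lists of state-action pairs in chronological order;
  h + (s,a) is h @ [(s,a)] and |h| is length h.  A mechanism is a pair
  (pol, p) with pol :: history => state => action pmf and
  p :: history => state => real.  Time indices t are 1-based as in the paper:
  the valuation / transition used at history h is indexed by length h + 1.\<close>

type_synonym ('s,'a) hist = "('s \<times> 'a) list"

definition in_H :: "nat \<Rightarrow> ('s,'a) hist \<Rightarrow> bool" where
  "in_H T h \<longleftrightarrow> length h < T"

definition last_sa :: "'s \<times> 'a \<Rightarrow> ('s,'a) hist \<Rightarrow> 's \<times> 'a" where
  "last_sa last0 h = (if h = [] then last0 else last h)"

fun uP_fuel :: "(nat \<Rightarrow> 's::finite \<Rightarrow> 'a::finite \<Rightarrow> real) \<Rightarrow> (nat \<Rightarrow> 's \<Rightarrow> 'a \<Rightarrow> 's pmf)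
    \<Rightarrow> (('s,'a) hist \<Rightarrow> 's \<Rightarrow> 'a pmf) \<Rightarrow> (('s,'a) hist \<Rightarrow> 's \<Rightarrow> real)
    \<Rightarrow> nat \<Rightarrow> ('s,'a) hist \<Rightarrow> 's \<Rightarrow> real" where
  "uP_fuel vP P pol p 0 h s = 0"
| "uP_fuel vP P pol p (Suc k) h s =
     (\<Sum>a\<in>UNIV. pmf (pol h s) a *
        (vP (length h + 1) s a +
         (\<Sum>s'\<in>UNIV. pmf (P (length h + 1) s a) s' * uP_fuel vP P pol p k (h @ [(s,a)]) s')))
     + p h s"

definition uP :: "nat \<Rightarrow> (nat \<Rightarrow> 's::finite \<Rightarrow> 'a::finite \<Rightarrow> real) \<Rightarrow> (nat \<Rightarrow> 's \<Rightarrow> 'a \<Rightarrow> 's pmf)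
    \<Rightarrow> (('s,'a) hist \<Rightarrow> 's \<Rightarrow> 'a pmf) \<Rightarrow> (('s,'a) hist \<Rightarrow> 's \<Rightarrow> real)
    \<Rightarrow> ('s,'a) hist \<Rightarrow> 's \<Rightarrow> real" where
  "uP T vP P pol p h s = uP_fuel vP P pol p (T - length h) h s"

definition uP0 :: "nat \<Rightarrow> (nat \<Rightarrow> 's::finite \<Rightarrow> 'a::finite \<Rightarrow> real) \<Rightarrow> 's pmf
    \<Rightarrow> (nat \<Rightarrow> 's \<Rightarrow> 'a \<Rightarrow> 's pmf)
    \<Rightarrow> (('s,'a) hist \<Rightarrow> 's \<Rightarrow> 'a pmf) \<Rightarrow> (('s,'a) hist \<Rightarrow> 's \<Rightarrow> real) \<Rightarrow> real" where
  "uP0 T vP P0 P pol p = (\<Sum>s\<in>UNIV. pmf P0 s * uP T vP P pol p [] s)"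

definition uA :: "(nat \<Rightarrow> 's \<Rightarrow> 'a::finite \<Rightarrow> real)
    \<Rightarrow> (('s,'a) hist \<Rightarrow> 's \<Rightarrow> 'a pmf) \<Rightarrow> (('s,'a) hist \<Rightarrow> 's \<Rightarrow> real)
    \<Rightarrow> ('s,'a) hist \<Rightarrow> 's \<Rightarrow> real" where
  "uA vA pol p h s = (\<Sum>a\<in>UNIV. pmf (pol h s) a * vA (length h + 1) s a) - p h s"

definition rep_hist :: "(('s,'a) hist \<Rightarrow> 's \<Rightarrow> 's) \<Rightarrow> ('s,'a) hist \<Rightarrow> ('s,'a) hist" where
  "rep_hist r h = map (\<lambda>i. (r (take i h) (fst (h ! i)), snd (h ! i))) [0..<length h]"

definition uA_rep :: "(nat \<Rightarrow> 's \<Rightarrow> 'a::finite \<Rightarrow> real)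
    \<Rightarrow> (('s,'a) hist \<Rightarrow> 's \<Rightarrow> 'a pmf) \<Rightarrow> (('s,'a) hist \<Rightarrow> 's \<Rightarrow> real)
    \<Rightarrow> (('s,'a) hist \<Rightarrow> 's \<Rightarrow> 's) \<Rightarrow> ('s,'a) hist \<Rightarrow> 's \<Rightarrow> real" where
  "uA_rep vA pol p r h s =
     (\<Sum>a\<in>UNIV. pmf (pol (rep_hist r h) (r h s)) a * vA (length h + 1) s a)
     - p (rep_hist r h) (r h s)"

definition IC_myopic :: "nat \<Rightarrow> (nat \<Rightarrow> 's \<Rightarrow> 'a::finite \<Rightarrow> real)
    \<Rightarrow> (('s,'a) hist \<Rightarrow> 's \<Rightarrow> 'a pmf) \<Rightarrow> (('s,'a) hist \<Rightarrow> 's \<Rightarrow> real) \<Rightarrow> bool" where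
  "IC_myopic T vA pol p \<longleftrightarrow>
     (\<forall>h s r. in_H T h \<longrightarrow>
        (\<forall>h' s'. length h' < length h \<longrightarrow> r h' s' = s') \<longrightarrow>
        uA vA pol p h s \<ge> uA_rep vA pol p r h s)"

definition overall_IR :: "(nat \<Rightarrow> 's::finite \<Rightarrow> 'a::finite \<Rightarrow> real) \<Rightarrow> 's pmf
    \<Rightarrow> (('s,'a) hist \<Rightarrow> 's \<Rightarrow> 'a pmf) \<Rightarrow> (('s,'a) hist \<Rightarrow> 's \<Rightarrow> real) \<Rightarrow> bool" where
  "overall_IR vA P0 pol p \<longleftrightarrow> (\<Sum>s\<in>UNIV. pmf P0 s * uA vA pol p [] s) \<ge> 0"

definition dynamic_IR :: "nat \<Rightarrow> (nat \<Rightarrow> 's \<Rightarrow> 'a::finite \<Rightarrow> real)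
    \<Rightarrow> (('s,'a) hist \<Rightarrow> 's \<Rightarrow> 'a pmf) \<Rightarrow> (('s,'a) hist \<Rightarrow> 's \<Rightarrow> real) \<Rightarrow> bool" where
  "dynamic_IR T vA pol p \<longleftrightarrow> (\<forall>h s. in_H T h \<longrightarrow> uA vA pol p h s \<ge> 0)"

datatype ir_mode = NoIR | OverallIR | DynamicIR

definition IR_ok :: "ir_mode \<Rightarrow> nat \<Rightarrow> (nat \<Rightarrow> 's::finite \<Rightarrow> 'a::finite \<Rightarrow> real) \<Rightarrow> 's pmf
    \<Rightarrow> (('s,'a) hist \<Rightarrow> 's \<Rightarrow> 'a pmf) \<Rightarrow> (('s,'a) hist \<Rightarrow> 's \<Rightarrow> real) \<Rightarrow> bool" where
  "IR_ok m T vA P0 pol p = (case m of NoIR \<Rightarrow> True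
       | OverallIR \<Rightarrow> overall_IR vA P0 pol p
       | DynamicIR \<Rightarrow> dynamic_IR T vA pol p)"

definition pay_ok :: "bool \<Rightarrow> nat \<Rightarrow> (('s,'a) hist \<Rightarrow> 's \<Rightarrow> real) \<Rightarrow> bool" where
  "pay_ok allow T p \<longleftrightarrow> (\<not> allow \<longrightarrow> (\<forall>h s. in_H T h \<longrightarrow> p h s = 0))"

end

theory Submission
  imports Defs
begin

definition Dist :: "'s pmf \<Rightarrow> (nat \<Rightarrow> 's \<Rightarrow> 'a \<Rightarrow> 's pmf) \<Rightarrow> nat \<Rightarrow> 's \<times> 'a \<Rightarrow> 's pmf" where
  "Dist P0 P t l = (if t = 0 then P0 else P t (fst l) (snd l))"

definition Gv :: "(nat \<Rightarrow> 's::finite \<Rightarrow> 'a::finite \<Rightarrow> real) \<Rightarrow> 's pmf \<Rightarrow> (nat \<Rightarrow> 's \<Rightarrow> 'a \<Rightarrow> 's pmf)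
    \<Rightarrow> (('s,'a) hist \<Rightarrow> 's \<Rightarrow> 'a pmf) \<Rightarrow> (('s,'a) hist \<Rightarrow> 's \<Rightarrow> real)
    \<Rightarrow> (nat \<Rightarrow> 's \<times> 'a \<Rightarrow> 's \<Rightarrow> real) \<Rightarrow> nat \<Rightarrow> 's \<times> 'a \<Rightarrow> ('s,'a) hist \<Rightarrow> real" where
  "Gv vP P0 P pol p W t l h = (\<Sum>s\<in>UNIV. pmf (Dist P0 P t l) s *
     ((\<Sum>a\<in>UNIV. pmf (pol h s) a *
        (vP (t + 1) s a + (\<Sum>s'\<in>UNIV. pmf (P (t + 1) s a) s' * W (t+1) (s,a) s'))) + p h s))"

definition Sset :: "'s \<times> 'a \<Rightarrow> nat \<Rightarrow> 's \<times> 'a \<Rightarrow> ('s,'a) hist set" where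
  "Sset last0 t l = {h. length h = t \<and> last_sa last0 h = l}"

definition selW where
  "selW vP P0 P pol p last0 W t l =
     (SOME h. h \<in> Sset last0 t l \<and> (\<forall>h'\<in>Sset last0 t l. Gv vP P0 P pol p W t l h' \<le> Gv vP P0 P pol p W t l h))"

fun Wf :: "(nat \<Rightarrow> 's::finite \<Rightarrow> 'a::finite \<Rightarrow> real) \<Rightarrow> 's pmf \<Rightarrow> (nat \<Rightarrow> 's \<Rightarrow> 'a \<Rightarrow> 's pmf)
    \<Rightarrow> (('s,'a) hist \<Rightarrow> 's \<Rightarrow> 'a pmf) \<Rightarrow> (('s,'a) hist \<Rightarrow> 's \<Rightarrow> real) \<Rightarrow> 's \<times> 'a
    \<Rightarrow> nat \<Rightarrow> nat \<Rightarrow> 's \<times> 'a \<Rightarrow> 's \<Rightarrow> real" where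
  "Wf vP P0 P pol p last0 0 t l s = 0"
| "Wf vP P0 P pol p last0 (Suc k) t l s =
    (let h = selW vP P0 P pol p last0 (Wf vP P0 P pol p last0 k) t l in
     (\<Sum>a\<in>UNIV. pmf (pol h s) a *
        (vP (t + 1) s a + (\<Sum>s'\<in>UNIV. pmf (P (t + 1) s a) s' * Wf vP P0 P pol p last0 k (t+1) (s,a) s'))) + p h s)"

lemma finite_Sset: "finite (Sset last0 t (l :: ('s::finite) \<times> ('a::finite)))"
proof -
  have "Sset last0 t l \<subseteq> {xs. length xs = t}" by (auto simp: Sset_def)
  moreover have "finite {xs :: ('s\<times>'a) list. length xs = t}" by (rule finite_list_length)
  ultimately show ?thesis by (rule finite_subset)
qed

lemma selW_prop:
  fixes h :: "('s::finite, 'a::finite) hist"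
  assumes "h \<in> Sset last0 t l"
  shows "selW vP P0 P pol p last0 W t l \<in> Sset last0 t l \<and>
    (\<forall>h'\<in>Sset last0 t l. Gv vP P0 P pol p W t l h' \<le> Gv vP P0 P pol p W t l (selW vP P0 P pol p last0 W t l))"
proof -
  let ?S = "Sset last0 t l" and ?G = "Gv vP P0 P pol p W t l"
  have fin: "finite (?G ` ?S)" using finite_Sset by blast
  have ne: "?G ` ?S \<noteq> {}" using assms by blast
  have "Max (?G ` ?S) \<in> ?G ` ?S" using fin ne by (rule Max_in)
  then obtain x where x: "x \<in> ?S" "?G x = Max (?G ` ?S)" by auto
  have "\<forall>h'\<in>?S. ?G h' \<le> ?G x" using x fin by (simp add: Max_ge)
  hence "\<exists>x. x \<in> ?S \<and> (\<forall>h'\<in>?S. ?G h' \<le> ?G x)" using x by blast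
  thus ?thesis unfolding selW_def by (rule someI_ex)
qed

lemma rep_hist_id:
  assumes "\<forall>h' s'. length h' < length h \<longrightarrow> r h' s' = s'"
  shows "rep_hist r h = h"
proof -
  have "rep_hist r h = map (\<lambda>i. h ! i) [0..<length h]"
    unfolding rep_hist_def using assms by (intro map_cong) auto
  also have "\<dots> = h" by (rule map_nth)
  finally show ?thesis .
qed

lemma sum_mono_w:
  fixes f g :: "'x::finite \<Rightarrow> real"
  assumes "\<And>x. w x \<ge> 0" "\<And>x. f x \<le> g x"
  shows "(\<Sum>x\<in>UNIV. w x * f x) \<le> (\<Sum>x\<in>UNIV. w x * g x)"
  by (rule sum_mono) (simp add: assms mult_left_mono)

lemma WfB:
  fixes h :: "('s::finite, 'a::finite) hist"
  shows "(\<Sum>s\<in>UNIV. pmf (Dist P0 P (length h) (last_sa last0 h)) s * uP_fuel vP P pol p k h s)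
       \<le> (\<Sum>s\<in>UNIV. pmf (Dist P0 P (length h) (last_sa last0 h)) s * Wf vP P0 P pol p last0 k (length h) (last_sa last0 h) s)"
proof (induction k arbitrary: h)
  case 0
  then show ?case by simp
next
  case (Suc k h)
  let ?t = "length h" and ?l = "last_sa last0 h"
  let ?W = "Wf vP P0 P pol p last0 k"
  let ?sg = "selW vP P0 P pol p last0 ?W ?t ?l"
  have hS: "h \<in> Sset last0 ?t ?l" by (simp add: Sset_def)
  have IH': "(\<Sum>s'\<in>UNIV. pmf (P (?t + 1) s a) s' * uP_fuel vP P pol p k (h @ [(s,a)]) s')
      \<le> (\<Sum>s'\<in>UNIV. pmf (P (?t + 1) s a) s' * ?W (?t+1) (s,a) s')" for s a
    using Suc.IH[of "h @ [(s,a)]"] by (simp add: Dist_def last_sa_def)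
  have "(\<Sum>s\<in>UNIV. pmf (Dist P0 P ?t ?l) s * uP_fuel vP P pol p (Suc k) h s)
      \<le> Gv vP P0 P pol p ?W ?t ?l h"
    unfolding Gv_def uP_fuel.simps
    by (intro sum_mono_w add_right_mono sum_mono_w add_left_mono IH') auto
  also have "\<dots> \<le> Gv vP P0 P pol p ?W ?t ?l ?sg"
    using selW_prop[OF hS] hS by blast
  also have "\<dots> = (\<Sum>s\<in>UNIV. pmf (Dist P0 P ?t ?l) s * Wf vP P0 P pol p last0 (Suc k) ?t ?l s)"
    unfolding Gv_def by (simp add: Let_def)
  finally show ?case .
qed

theorem lemma6:
  fixes T :: nat
    and vP vA :: "nat \<Rightarrow> 's::finite \<Rightarrow> 'a::finite \<Rightarrow> real"
    and P0 :: "'s pmf"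
    and P :: "nat \<Rightarrow> 's \<Rightarrow> 'a \<Rightarrow> 's pmf"
    and last0 :: "'s \<times> 'a"
    and allow_pay :: bool
    and ir :: ir_mode
    and pol :: "('s,'a) hist \<Rightarrow> 's \<Rightarrow> 'a pmf"
    and p :: "('s,'a) hist \<Rightarrow> 's \<Rightarrow> real"
  assumes "IC_myopic T vA pol p"
    and "IR_ok ir T vA P0 pol p"
    and "pay_ok allow_pay T p"
  shows "\<exists>(pol' :: ('s,'a) hist \<Rightarrow> 's \<Rightarrow> 'a pmf) (p' :: ('s,'a) hist \<Rightarrow> 's \<Rightarrow> real).
           IC_myopic T vA pol' p' \<and> IR_ok ir T vA P0 pol' p' \<and> pay_ok allow_pay T p' \<and>
           uP0 T vP P0 P pol' p' \<ge> uP0 T vP P0 P pol p \<and>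
           (\<exists>f g. \<forall>h s. in_H T h \<longrightarrow>
               pol' h s = f (length h) (last_sa last0 h) s \<and>
               p' h s = g (length h) (last_sa last0 h) s)"
proof -
  define sig where "sig t l = selW vP P0 P pol p last0 (Wf vP P0 P pol p last0 (T - t - 1)) t l" for t l
  define pol' where "pol' h s = pol (sig (length h) (last_sa last0 h)) s" for h s
  define p' where "p' h s = p (sig (length h) (last_sa last0 h)) s" for h s
  have sigS: "sig (length h) (last_sa last0 h) \<in> Sset last0 (length h) (last_sa last0 h)" for h
    unfolding sig_def by (rule conjunct1[OF selW_prop]) (simp add: Sset_def)
  hence siglen: "length (sig (length h) (last_sa last0 h)) = length h" for h
    by (simp add: Sset_def)
  have sig0: "sig 0 last0 = []"
    using sigS[of "[]"] by (simp add: Sset_def last_sa_def)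
  have uA': "uA vA pol' p' h s = uA vA pol p (sig (length h) (last_sa last0 h)) s" for h s
    unfolding uA_def pol'_def p'_def siglen ..
  have IC: "IC_myopic T vA pol' p'"
    unfolding IC_myopic_def
  proof (intro allI impI)
    fix h :: "('s,'a) hist" and s :: 's and r :: "('s,'a) hist \<Rightarrow> 's \<Rightarrow> 's"
    assume H: "in_H T h" and r: "\<forall>h' s'. length h' < length h \<longrightarrow> r h' s' = s'"
    let ?g = "sig (length h) (last_sa last0 h)"
    define r0 where "r0 h' x = (if h' = ?g then r h s else x)" for h' x
    have r0: "\<forall>h' s'. length h' < length ?g \<longrightarrow> r0 h' s' = s'"
      unfolding r0_def by auto
    have "in_H T ?g" using H siglen by (simp add: in_H_def)
    hence "uA vA pol p ?g s \<ge> uA_rep vA pol p r0 ?g s"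
      using assms(1) r0 unfolding IC_myopic_def by blast
    moreover have "uA_rep vA pol p r0 ?g s = uA_rep vA pol' p' r h s"
      unfolding uA_rep_def rep_hist_id[OF r0] rep_hist_id[OF r] pol'_def p'_def siglen
      by (simp add: r0_def)
    ultimately show "uA_rep vA pol' p' r h s \<le> uA vA pol' p' h s" by (simp add: uA')
  qed
  have IR: "IR_ok ir T vA P0 pol' p'"
  proof (cases ir)
    case NoIR then show ?thesis by (simp add: IR_ok_def)
  next
    case OverallIR
    have "uA vA pol' p' [] s = uA vA pol p [] s" for s
      using uA'[of "[]" s] sig0 by (simp add: last_sa_def)
    then show ?thesis using assms(2) OverallIR by (simp add: IR_ok_def overall_IR_def)
  next
    case DynamicIR
    have "uA vA pol' p' h s \<ge> 0" if "in_H T h" for h s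
      using assms(2) DynamicIR that siglen[of h] uA'[of h s]
      by (simp add: IR_ok_def dynamic_IR_def in_H_def)
    then show ?thesis using DynamicIR by (simp add: IR_ok_def dynamic_IR_def)
  qed
  have PO: "pay_ok allow_pay T p'"
    using assms(3) siglen by (simp add: pay_ok_def p'_def in_H_def)
  have A: "uP_fuel vP P pol' p' k h s = Wf vP P0 P pol p last0 k (length h) (last_sa last0 h) s"
    if "length h + k = T" for k h s
    using that
  proof (induction k arbitrary: h s)
    case 0 then show ?case by simp
  next
    case (Suc k h s)
    have e: "T - Suc (length h) = k" using Suc.prems by simp
    have IH: "uP_fuel vP P pol' p' k (h @ [(s,a)]) s' = Wf vP P0 P pol p last0 k (length h + 1) (s,a) s'" for a s'
      using Suc.IH[of "h @ [(s,a)]" s'] Suc.prems by (simp add: last_sa_def)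
    show ?case
      unfolding uP_fuel.simps IH Wf.simps Let_def
      by (simp add: pol'_def p'_def sig_def e)
  qed
  have U: "uP0 T vP P0 P pol p \<le> uP0 T vP P0 P pol' p'"
  proof -
    have "uP0 T vP P0 P pol p = (\<Sum>s\<in>UNIV. pmf (Dist P0 P (length ([]::('s,'a) hist)) (last_sa last0 ([]::('s,'a) hist))) s * uP_fuel vP P pol p T [] s)"
      by (simp add: uP0_def uP_def Dist_def)
    also have "\<dots> \<le> (\<Sum>s\<in>UNIV. pmf (Dist P0 P (length ([]::('s,'a) hist)) (last_sa last0 ([]::('s,'a) hist))) s * Wf vP P0 P pol p last0 T (length ([]::('s,'a) hist)) (last_sa last0 ([]::('s,'a) hist)) s)"
      by (rule WfB)
    also have "\<dots> = uP0 T vP P0 P pol' p'"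
      using A[of "[]" T] by (simp add: uP0_def uP_def Dist_def)
    finally show ?thesis .
  qed
  have F: "\<forall>h s. in_H T h \<longrightarrow>
               pol' h s = (\<lambda>t l s. pol (sig t l) s) (length h) (last_sa last0 h) s \<and>
               p' h s = (\<lambda>t l s. p (sig t l) s) (length h) (last_sa last0 h) s"
    by (simp add: pol'_def p'_def)
  have "\<exists>f g. \<forall>h s. in_H T h \<longrightarrow>
               pol' h s = f (length h) (last_sa last0 h) s \<and>
               p' h s = g (length h) (last_sa last0 h) s"
    using F by (intro exI)
  then show ?thesis using IC IR PO U by (intro exI[of _ pol'] exI[of _ p']) blast
qed

end
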